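(* Let $n\in\mathbb{N}$, $\delta\in(0,1]$ and $\varepsilon_0>0$ with $\varepsilon_0\le\log\left(\frac{n}{16\log(2/\delta)}\right)$. Let $C\sim\mathrm{Bin}(n-1,e^{-\varepsilon_0})$, conditionally on $C$ let $A\sim\mathrm{Bin}(C,1/2)$, and let $\Delta\sim\mathrm{Bern}\left(\frac{e^{\varepsilon_0}}{e^{\varepsilon_0}+1}\right)$ be independent of $(C,A)$. Let $P=(A+\Delta,\,C-A+1-\Delta)$ and $Q=(A+1-\Delta,\,C-A+\Delta)$. Then $P$ and $Q$ are $(\varepsilon,\delta)$-indistinguishable for $$\varepsilon=\log\left(1+\frac{e^{\varepsilon_0}-1}{e^{\varepsilon_0}+1}\left(\frac{8\sqrt{e^{\varepsilon_0}\log(4/\delta)}}{\sqrt{n}}+\frac{8e^{\varepsilon_0}}{n}\right)\right).$$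
   Context: Two random variables $P,Q$ on the same space are $(\varepsilon,\delta)$-indistinguishable if for every event $E$, $e^{-\varepsilon}(\Pr(Q\in E)-\delta)\le\Pr(P\in E)\le e^{\varepsilon}\Pr(Q\in E)+\delta$. $\mathrm{Bin}(m,p)$ is the binomial distribution and $\mathrm{Bern}(p)$ the Bernoulli distribution with bias $p$. *)

theory Defs
  imports "HOL-Probability.Probability"
begin

definition indist :: "real \<Rightarrow> real \<Rightarrow> 'a pmf \<Rightarrow> 'a pmf \<Rightarrow> bool" where
  "indist \<epsilon> \<delta> P Q \<longleftrightarrow>
     (\<forall>E. exp (-\<epsilon>) * (measure_pmf.prob Q E - \<delta>) \<le> measure_pmf.prob P E \<and>
          measure_pmf.prob P E \<le> exp \<epsilon> * measure_pmf.prob Q E + \<delta>)"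

definition CAD :: "nat \<Rightarrow> real \<Rightarrow> (nat \<times> nat \<times> bool) pmf" where
  "CAD n \<epsilon>0 =
     do { C \<leftarrow> binomial_pmf (n - 1) (exp (-\<epsilon>0));
          A \<leftarrow> binomial_pmf C (1/2);
          D \<leftarrow> bernoulli_pmf (exp \<epsilon>0 / (exp \<epsilon>0 + 1));
          return_pmf (C, A, D) }"

definition P_dist :: "nat \<Rightarrow> real \<Rightarrow> (nat \<times> nat) pmf" where
  "P_dist n \<epsilon>0 = map_pmf (\<lambda>(C, A, D). (A + of_bool D, C - A + 1 - of_bool D)) (CAD n \<epsilon>0)"

definition Q_dist :: "nat \<Rightarrow> real \<Rightarrow> (nat \<times> nat) pmf" where
  "Q_dist n \<epsilon>0 = map_pmf (\<lambda>(C, A, D). (A + 1 - of_bool D, C - A + of_bool D)) (CAD n \<epsilon>0)"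

end

theory Submission
  imports Defs
begin


lemma pmf_bind_single:
  assumes "\<And>x. x \<noteq> zz \<Longrightarrow> pmf (f x) i = 0"
  shows "pmf (bind_pmf M f) i = pmf M zz * pmf (f zz) i"
proof -
  have "pmf (bind_pmf M f) i = (\<integral>x. pmf (f x) i \<partial>measure_pmf M)" by (rule pmf_bind)
  also have "\<dots> = (\<Sum>x\<in>{zz}. pmf (f x) i * pmf M x)"
    by (rule integral_measure_pmf_real) (use assms in auto)
  finally show ?thesis by simp
qed

lemma pmf_CAD:
  "pmf (CAD n e0) (c, a, d) = pmf (binomial_pmf (n - 1) (exp (-e0))) c *
     pmf (binomial_pmf c (1/2)) a * pmf (bernoulli_pmf (exp e0 / (exp e0 + 1))) d"
proof -
  have i3: "pmf (bernoulli_pmf r \<bind> (\<lambda>D. return_pmf (C, A, D))) (c, a, d) =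
        pmf (bernoulli_pmf r) d * (if C = c \<and> A = a then 1 else 0)" for r C A
    by (subst pmf_bind_single[where zz = d]) (auto simp: indicator_def)
  have i2: "pmf (binomial_pmf C (1/2) \<bind> (\<lambda>A. bernoulli_pmf r \<bind> (\<lambda>D. return_pmf (C, A, D)))) (c, a, d) =
        pmf (binomial_pmf C (1/2)) a * pmf (bernoulli_pmf r) d * (if C = c then 1 else 0)" for r C
    by (subst pmf_bind_single[where zz = a]) (auto simp: i3)
  show ?thesis unfolding CAD_def
    by (subst pmf_bind_single[where zz = c]) (auto simp: i2)
qed

lemma sum_Sigma':
  assumes "finite A" "\<And>a. a \<in> A \<Longrightarrow> finite (B a)"
  shows "(\<Sum>x\<in>Sigma A B. f x) = (\<Sum>a\<in>A. \<Sum>b\<in>B a. f (a, b))"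
  using assms by (subst sum.Sigma) (auto simp: split_def)

lemma sum_UNIV_bool': "(\<Sum>d\<in>(UNIV::bool set). f d) = f True + f False"
  by (simp add: UNIV_bool add.commute)

lemma prob_CAD:
  assumes "0 < e0"
  shows "measure_pmf.prob (CAD n e0) S =
    (\<Sum>c\<le>n-1. pmf (binomial_pmf (n - 1) (exp (-e0))) c *
      (\<Sum>a\<le>c. pmf (binomial_pmf c (1/2)) a *
         (exp e0 / (exp e0 + 1) * indicator S (c, a, True) +
          (1 - exp e0 / (exp e0 + 1)) * indicator S (c, a, False))))"
proof -
  define F where "F = Sigma {..n-1} (\<lambda>c. Sigma {..c} (\<lambda>_. (UNIV :: bool set)))"
  have q: "0 < exp (-e0)" "exp (-e0) < 1" using assms by auto
  have pp: "0 \<le> exp e0 / (exp e0 + 1)" "exp e0 / (exp e0 + 1) \<le> 1"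
    using exp_gt_zero[of e0] by (auto simp: divide_simps add_pos_pos)
  have finF: "finite F" unfolding F_def by (auto intro!: finite_SigmaI)
  have "measure_pmf.prob (CAD n e0) S = measure_pmf.expectation (CAD n e0) (indicator S)"
    by simp
  also have "\<dots> = (\<Sum>x\<in>F. indicator S x * pmf (CAD n e0) x)"
  proof (rule integral_measure_pmf_real[OF finF])
    fix x assume x: "x \<in> set_pmf (CAD n e0)"
    obtain c a d where xe: "x = (c, a, d)" by (cases x) auto
    have "pmf (CAD n e0) x \<noteq> 0" using x by (simp add: set_pmf_iff)
    hence "c \<in> set_pmf (binomial_pmf (n - 1) (exp (-e0)))" "a \<in> set_pmf (binomial_pmf c (1/2))"
      unfolding xe pmf_CAD by (auto simp: set_pmf_iff)
    thus "x \<in> F" using q unfolding F_def xe by auto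
  qed
  also have "\<dots> = (\<Sum>c\<le>n-1. \<Sum>a\<le>c. \<Sum>d\<in>UNIV. indicator S (c, a, d) * pmf (CAD n e0) (c, a, d))"
    unfolding F_def
    apply (subst sum_Sigma', simp, simp)
    apply (rule sum.cong[OF refl])
    apply (subst sum_Sigma', simp, simp)
    apply (rule refl)
    done
  also have "\<dots> = (\<Sum>c\<le>n-1. pmf (binomial_pmf (n - 1) (exp (-e0))) c *
      (\<Sum>a\<le>c. pmf (binomial_pmf c (1/2)) a *
         (exp e0 / (exp e0 + 1) * indicator S (c, a, True) +
          (1 - exp e0 / (exp e0 + 1)) * indicator S (c, a, False))))"
    unfolding sum_distrib_left
    by (intro sum.cong refl; simp only: sum_UNIV_bool'; simp add: pmf_CAD pp pmf_bernoulli_True pmf_bernoulli_False del: pmf_binomial, simp add: algebra_simps del: pmf_binomial)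
  finally show ?thesis .
qed

definition bh :: "nat \<Rightarrow> nat \<Rightarrow> real" where
  "bh c k = pmf (binomial_pmf c (1/2)) k"

definition bh' :: "nat \<Rightarrow> nat \<Rightarrow> real" where
  "bh' c x = (if x = 0 then 0 else bh c (x - 1))"

lemma bh_eq: "bh c k = real (c choose k) / 2 ^ c"
proof (cases "k \<le> c")
  case True
  have "(1/2::real) ^ k * (1/2) ^ (c - k) = (1/2) ^ c"
    using True by (simp add: power_add[symmetric])
  thus ?thesis unfolding bh_def by (simp add: pmf_binomial power_one_over)
next
  case False
  thus ?thesis unfolding bh_def by (simp add: pmf_binomial binomial_eq_0)
qed

lemma bh_nonneg: "0 \<le> bh c k" unfolding bh_def by simp
lemma bh'_nonneg: "0 \<le> bh' c k" unfolding bh'_def by (simp add: bh_nonneg)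

lemma bh_Suc_c: "bh c (Suc c) = 0" by (simp add: bh_eq)

lemma bh_rel: "bh c k * real (c - k) = bh c (Suc k) * real (Suc k)"
proof -
  have "(c - k) * (c choose k) = Suc k * (c choose Suc k)"
    by (metis binomial_absorb_comp binomial_absorption)
  hence "real (c - k) * real (c choose k) = real (Suc k) * real (c choose Suc k)"
    by (metis of_nat_mult)
  thus ?thesis by (simp add: bh_eq field_simps)
qed

lemma bh'_rel:
  assumes "x \<le> Suc c"
  shows "bh' c x * real (Suc c - x) = bh c x * real x"
proof (cases x)
  case 0 thus ?thesis by (simp add: bh'_def)
next
  case (Suc j)
  thus ?thesis using bh_rel[of c j] assms by (simp add: bh'_def)
qed

lemma reindex:
  "(\<Sum>a\<le>c. bh c a * (p1 * g (Suc a) + p0 * g a)) =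
   (\<Sum>x\<le>Suc c. g x * (p1 * bh' c x + p0 * bh c x))"
proof -
  have 1: "(\<Sum>x\<le>Suc c. g x * (p1 * bh' c x)) = (\<Sum>a\<le>c. bh c a * (p1 * g (Suc a)))"
    by (subst sum.atMost_Suc_shift) (simp add: bh'_def mult_ac)
  have 2: "(\<Sum>x\<le>Suc c. g x * (p0 * bh c x)) = (\<Sum>a\<le>c. bh c a * (p0 * g a))"
    by (simp add: bh_Suc_c mult_ac)
  have "(\<Sum>x\<le>Suc c. g x * (p1 * bh' c x + p0 * bh c x)) =
     (\<Sum>x\<le>Suc c. g x * (p1 * bh' c x)) + (\<Sum>x\<le>Suc c. g x * (p0 * bh c x))"
    by (simp only: distrib_left sum.distrib)
  also have "\<dots> = (\<Sum>a\<le>c. bh c a * (p1 * g (Suc a))) + (\<Sum>a\<le>c. bh c a * (p0 * g a))"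
    by (simp only: 1 2)
  also have "\<dots> = (\<Sum>a\<le>c. bh c a * (p1 * g (Suc a) + p0 * g a))"
    by (simp only: distrib_left sum.distrib)
  finally show ?thesis by simp
qed

lemma probP:
  assumes "0 < e0"
  shows "measure_pmf.prob (P_dist n e0) E =
    (\<Sum>c\<le>n-1. pmf (binomial_pmf (n - 1) (exp (-e0))) c *
      (\<Sum>x\<le>Suc c. indicator E (x, Suc c - x) *
         (exp e0 / (exp e0 + 1) * bh' c x + (1 - exp e0 / (exp e0 + 1)) * bh c x)))" (is "_ = ?thesis_rhs")
proof -
  have "measure_pmf.prob (P_dist n e0) E =
     measure_pmf.prob (CAD n e0) ((\<lambda>(C, A, D). (A + of_bool D, C - A + 1 - of_bool D)) -` E)"
    unfolding P_dist_def measure_map_pmf ..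
  also have "\<dots> = ?thesis_rhs"
  proof -
    have inner: "(\<Sum>a\<le>c. pmf (binomial_pmf c (1/2)) a *
         (exp e0 / (exp e0 + 1) * indicator ((\<lambda>(C, A, D). (A + of_bool D, C - A + 1 - of_bool D)) -` E) (c, a, True) +
          (1 - exp e0 / (exp e0 + 1)) * indicator ((\<lambda>(C, A, D). (A + of_bool D, C - A + 1 - of_bool D)) -` E) (c, a, False))) =
      (\<Sum>x\<le>Suc c. indicator E (x, Suc c - x) *
         (exp e0 / (exp e0 + 1) * bh' c x + (1 - exp e0 / (exp e0 + 1)) * bh c x))" for c
      unfolding reindex[symmetric] bh_def[symmetric]
      by (intro sum.cong refl) (auto simp: indicator_def Suc_diff_le)
    show ?thesis unfolding prob_CAD[OF assms] inner ..
  qed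
  finally show ?thesis .
qed

lemma probQ:
  assumes "0 < e0"
  shows "measure_pmf.prob (Q_dist n e0) E =
    (\<Sum>c\<le>n-1. pmf (binomial_pmf (n - 1) (exp (-e0))) c *
      (\<Sum>x\<le>Suc c. indicator E (x, Suc c - x) *
         ((1 - exp e0 / (exp e0 + 1)) * bh' c x + exp e0 / (exp e0 + 1) * bh c x)))" (is "_ = ?thesis_rhs")
proof -
  have "measure_pmf.prob (Q_dist n e0) E =
     measure_pmf.prob (CAD n e0) ((\<lambda>(C, A, D). (A + 1 - of_bool D, C - A + of_bool D)) -` E)"
    unfolding Q_dist_def measure_map_pmf ..
  also have "\<dots> = ?thesis_rhs"
  proof -
    have inner: "(\<Sum>a\<le>c. pmf (binomial_pmf c (1/2)) a *
         (exp e0 / (exp e0 + 1) * indicator ((\<lambda>(C, A, D). (A + 1 - of_bool D, C - A + of_bool D)) -` E) (c, a, True) +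
          (1 - exp e0 / (exp e0 + 1)) * indicator ((\<lambda>(C, A, D). (A + 1 - of_bool D, C - A + of_bool D)) -` E) (c, a, False))) =
      (\<Sum>x\<le>Suc c. indicator E (x, Suc c - x) *
         ((1 - exp e0 / (exp e0 + 1)) * bh' c x + exp e0 / (exp e0 + 1) * bh c x))" for c
      unfolding reindex[symmetric] bh_def[symmetric]
      by (intro sum.cong refl) (auto simp: indicator_def Suc_diff_le algebra_simps)
    show ?thesis unfolding prob_CAD[OF assms] inner ..
  qed
  finally show ?thesis .
qed

lemma ratio_core:
  fixes B0 B1 x y e K :: real
  assumes "0 \<le> B1" "0 \<le> B0" "B1 * y = B0 * x" "0 \<le> x" "0 \<le> y"
    "x = 0 \<Longrightarrow> B1 = 0" "1 < e" "0 \<le> K"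
    "(e - 1) * (x - y) \<le> K * (x + e * y)"
  shows "e * B1 + B0 \<le> (1 + K) * (B1 + e * B0)"
proof (cases "x = 0")
  case True
  hence "B1 = 0" using assms by auto
  moreover have "B0 \<le> (1 + K) * (e * B0)"
  proof -
    have "B0 \<le> e * B0" using mult_right_mono[of 1 e B0] assms by simp
    also have "\<dots> \<le> (1 + K) * (e * B0)" using mult_right_mono[of 1 "1 + K" "e * B0"] assms by simp
    finally show ?thesis .
  qed
  ultimately show ?thesis by simp
next
  case False
  hence xp: "0 < x" using assms by auto
  have "x * (e * B1 + B0) = B1 * (e * x + y)" using assms(3) by (simp add: algebra_simps)
  also have "\<dots> \<le> B1 * ((1 + K) * (x + e * y))"
    using assms(1,9) by (intro mult_left_mono) (auto simp: algebra_simps)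
  also have "\<dots> = (1 + K) * (B1 * x) + (1 + K) * e * (B1 * y)" by (simp add: algebra_simps)
  also have "\<dots> = (1 + K) * (B1 * x) + (1 + K) * e * (B0 * x)" using assms(3) by simp
  also have "\<dots> = x * ((1 + K) * (B1 + e * B0))" by (simp add: algebra_simps)
  finally show ?thesis using xp by (simp add: mult_le_cancel_left)
qed

lemma good_imp:
  fixes x y e K T :: real
  assumes "1 < e" "K * (e + 1) = (e - 1) * T" "(x - y) * (2 + K) \<le> T * (x + y)"
  shows "(e - 1) * (x - y) \<le> K * (x + e * y)"
proof -
  have "2 * (K * (x + e * y) - (e - 1) * (x - y)) =
        K * (e + 1) * (x + y) - K * (e - 1) * (x - y) - 2 * (e - 1) * (x - y)"
    by (simp add: algebra_simps)
  also have "\<dots> = (e - 1) * T * (x + y) - K * (e - 1) * (x - y) - 2 * (e - 1) * (x - y)"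
    using assms(2) by simp
  also have "\<dots> = (e - 1) * (T * (x + y) - (x - y) * (2 + K))"
    by (simp add: algebra_simps)
  also have "\<dots> \<ge> 0" using assms by simp
  finally show ?thesis by simp
qed

definition Gset :: "real \<Rightarrow> real \<Rightarrow> (nat \<times> nat) set" where
  "Gset K T = {(x, y). (real x - real y) * (2 + K) \<le> T * (real x + real y) \<and>
                       (real y - real x) * (2 + K) \<le> T * (real x + real y)}"

lemma point_ratio:
  fixes e K T :: real
  assumes "1 < e" "0 \<le> K" "K * (e + 1) = (e - 1) * T" "x \<le> Suc c" "(x, Suc c - x) \<in> Gset K T"
  shows "e / (e + 1) * bh' c x + (1 - e / (e + 1)) * bh c x \<le>
           (1 + K) * ((1 - e / (e + 1)) * bh' c x + e / (e + 1) * bh c x)"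
    and "(1 - e / (e + 1)) * bh' c x + e / (e + 1) * bh c x \<le>
           (1 + K) * (e / (e + 1) * bh' c x + (1 - e / (e + 1)) * bh c x)"
proof -
  define y where "y = Suc c - x"
  have rel: "bh' c x * real y = bh c x * real x" unfolding y_def by (rule bh'_rel[OF assms(4)])
  have g1: "(real x - real y) * (2 + K) \<le> T * (real x + real y)"
   and g2: "(real y - real x) * (2 + K) \<le> T * (real x + real y)"
    using assms(5) unfolding Gset_def y_def by auto
  have x0: "x = 0 \<Longrightarrow> bh' c x = 0" by (simp add: bh'_def)
  have y0: "y = 0 \<Longrightarrow> bh c x = 0" using assms(4) unfolding y_def
    by (metis Suc_diff_le bh_Suc_c diff_is_0_eq le_antisym diff_self_eq_0 nat.distinct(1) order_refl)
  have c1: "(e - 1) * (real x - real y) \<le> K * (real x + e * real y)"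
    by (rule good_imp[OF assms(1,3) g1])
  have c2: "(e - 1) * (real y - real x) \<le> K * (real y + e * real x)"
    by (rule good_imp[OF assms(1,3)]) (use g2 in \<open>simp add: add.commute\<close>)
  have r1: "e * bh' c x + bh c x \<le> (1 + K) * (bh' c x + e * bh c x)"
    by (rule ratio_core[OF bh'_nonneg bh_nonneg rel _ _ _ assms(1,2) c1]) (use x0 in auto)
  have r2: "e * bh c x + bh' c x \<le> (1 + K) * (bh c x + e * bh' c x)"
    by (rule ratio_core[OF bh_nonneg bh'_nonneg _ _ _ _ assms(1,2) c2]) (use rel y0 in auto)
  have ep: "0 < e + 1" using assms(1) by simp
  have eq: "1 - e / (e + 1) = 1 / (e + 1)" using ep by (simp add: field_simps)
  show "e / (e + 1) * bh' c x + (1 - e / (e + 1)) * bh c x \<le>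
           (1 + K) * ((1 - e / (e + 1)) * bh' c x + e / (e + 1) * bh c x)"
  proof -
    have a: "e / (e + 1) * bh' c x + 1 / (e + 1) * bh c x = (e * bh' c x + bh c x) / (e + 1)"
      by (simp add: add_divide_distrib[symmetric])
    have b: "(1 + K) * (1 / (e + 1) * bh' c x + e / (e + 1) * bh c x) = ((1 + K) * (bh' c x + e * bh c x)) / (e + 1)"
      by (simp add: add_divide_distrib[symmetric])
    show ?thesis unfolding eq a b using r1 ep by (intro divide_right_mono) auto
  qed
  show "(1 - e / (e + 1)) * bh' c x + e / (e + 1) * bh c x \<le>
           (1 + K) * (e / (e + 1) * bh' c x + (1 - e / (e + 1)) * bh c x)"
  proof -
    have a: "1 / (e + 1) * bh' c x + e / (e + 1) * bh c x = (e * bh c x + bh' c x) / (e + 1)"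
      by (simp add: add_divide_distrib[symmetric])
    have b: "(1 + K) * (e / (e + 1) * bh' c x + 1 / (e + 1) * bh c x) = ((1 + K) * (bh c x + e * bh' c x)) / (e + 1)"
      by (simp add: add_divide_distrib[symmetric])
    show ?thesis unfolding eq a b using r2 ep by (intro divide_right_mono) auto
  qed
qed

lemma sum_ineq_gen:
  fixes w1 w2 :: "nat \<Rightarrow> nat \<Rightarrow> real" and pc :: "nat \<Rightarrow> real" and K :: real
  assumes "\<And>c. 0 \<le> pc c" "\<And>c x. 0 \<le> w1 c x"
    "\<And>c x. x \<le> Suc c \<Longrightarrow> (x, Suc c - x) \<in> G \<Longrightarrow> w1 c x \<le> (1 + K) * w2 c x"
    "\<And>c x. 0 \<le> w2 c x" "0 \<le> K"
  shows "(\<Sum>c\<le>N. pc c * (\<Sum>x\<le>Suc c. indicator E (x, Suc c - x) * w1 c x)) \<le>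
         (1 + K) * (\<Sum>c\<le>N. pc c * (\<Sum>x\<le>Suc c. indicator E (x, Suc c - x) * w2 c x)) +
         (\<Sum>c\<le>N. pc c * (\<Sum>x\<le>Suc c. indicator (- G) (x, Suc c - x) * w1 c x))"
    (is "_ \<le> ?thesis_rhs")
proof -
  have pt: "indicator E (x, Suc c - x) * w1 c x \<le>
      (1 + K) * (indicator E (x, Suc c - x) * w2 c x) + indicator (- G) (x, Suc c - x) * w1 c x"
    if "x \<le> Suc c" for c x
    using assms(2)[of c x] assms(3)[OF that] assms(4)[of c x] assms(5) that
    by (auto simp: indicator_def)
  have "(\<Sum>c\<le>N. pc c * (\<Sum>x\<le>Suc c. indicator E (x, Suc c - x) * w1 c x)) \<le>
     (\<Sum>c\<le>N. pc c * (\<Sum>x\<le>Suc c. (1 + K) * (indicator E (x, Suc c - x) * w2 c x) +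
        indicator (- G) (x, Suc c - x) * w1 c x))"
    by (intro sum_mono mult_left_mono assms(1)) (use pt in auto)
  also have "\<dots> = ?thesis_rhs"
    by (simp only: sum.distrib sum_distrib_left distrib_left mult.assoc mult.left_commute)
  finally show ?thesis .
qed

lemma main_ineq:
  fixes K T :: real
  assumes "0 < e0" "0 \<le> K" "K * (exp e0 + 1) = (exp e0 - 1) * T"
  shows "measure_pmf.prob (P_dist n e0) E \<le>
           (1 + K) * measure_pmf.prob (Q_dist n e0) E + measure_pmf.prob (P_dist n e0) (- Gset K T)"
    and "measure_pmf.prob (Q_dist n e0) E \<le>
           (1 + K) * measure_pmf.prob (P_dist n e0) E + measure_pmf.prob (Q_dist n e0) (- Gset K T)"
proof -
  have e1: "1 < exp e0" using assms(1) by simp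
  have pp: "0 \<le> exp e0 / (exp e0 + 1)" "exp e0 / (exp e0 + 1) \<le> 1"
    using exp_gt_zero[of e0] by (auto simp: divide_simps add_pos_pos)
  have w: "0 \<le> exp e0 / (exp e0 + 1) * bh' c x + (1 - exp e0 / (exp e0 + 1)) * bh c x"
          "0 \<le> (1 - exp e0 / (exp e0 + 1)) * bh' c x + exp e0 / (exp e0 + 1) * bh c x" for c x
    using pp bh_nonneg[of c x] bh'_nonneg[of c x] by auto
  show "measure_pmf.prob (P_dist n e0) E \<le>
           (1 + K) * measure_pmf.prob (Q_dist n e0) E + measure_pmf.prob (P_dist n e0) (- Gset K T)"
    unfolding probP[OF assms(1)] probQ[OF assms(1)]
    by (rule sum_ineq_gen[OF pmf_nonneg w(1) point_ratio(1)[OF e1 assms(2,3)] w(2) assms(2)])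
  show "measure_pmf.prob (Q_dist n e0) E \<le>
           (1 + K) * measure_pmf.prob (P_dist n e0) E + measure_pmf.prob (Q_dist n e0) (- Gset K T)"
    unfolding probP[OF assms(1)] probQ[OF assms(1)]
    by (rule sum_ineq_gen[OF pmf_nonneg w(2) point_ratio(2)[OF e1 assms(2,3)] w(1) assms(2)])
qed

lemma pgf_binomial:
  assumes "0 \<le> q" "q \<le> 1"
  shows "(\<Sum>k\<le>N. pmf (binomial_pmf N q) k * z ^ k) = (1 - q + q * z) ^ N"
proof -
  have "(1 - q + q * z) ^ N = (q * z + (1 - q)) ^ N" by (simp add: add.commute)
  also have "\<dots> = (\<Sum>k\<le>N. real (N choose k) * (q * z) ^ k * (1 - q) ^ (N - k))"
    by (rule binomial_ring)
  also have "\<dots> = (\<Sum>k\<le>N. pmf (binomial_pmf N q) k * z ^ k)"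
    using assms by (intro sum.cong refl) (simp add: pmf_binomial power_mult_distrib mult_ac)
  finally show ?thesis ..
qed

lemma pgf_bh: "(\<Sum>a\<le>c. bh c a * w ^ a) = ((1 + w) / 2) ^ c"
  unfolding bh_def by (subst pgf_binomial) (auto simp: field_simps)

lemma bad_point:
  fixes K T l :: real and a c x y :: nat
  assumes "a \<le> c" "0 \<le> K" "0 < l"
    "real x + real y = real c + 1"
    "real x - real y \<le> real a - (real c - real a) + 1"
    "real y - real x \<le> (real c - real a) - real a + 1"
    "(x, y) \<notin> Gset K T"
  shows "1 \<le> exp (l * ((2 + K - T) * real a - (2 + K + T) * (real c - real a) + (2 + K - T))) +
              exp (l * ((2 + K - T) * (real c - real a) - (2 + K + T) * real a + (2 + K - T)))"
proof -
  have k2: "0 \<le> 2 + K" using assms by simp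
  from assms(7) consider
      "(real x - real y) * (2 + K) > T * (real x + real y)"
    | "(real y - real x) * (2 + K) > T * (real x + real y)"
    unfolding Gset_def by force
  thus ?thesis
  proof cases
    case 1
    have "(real a - (real c - real a) + 1) * (2 + K) \<ge> (real x - real y) * (2 + K)"
      using assms(5) k2 by (intro mult_right_mono) auto
    hence "(real a - (real c - real a) + 1) * (2 + K) > T * (real a + (real c - real a) + 1)"
      using 1 assms(4) by simp
    hence "0 < (2 + K - T) * real a - (2 + K + T) * (real c - real a) + (2 + K - T)"
      by (simp add: algebra_simps)
    hence "1 \<le> exp (l * ((2 + K - T) * real a - (2 + K + T) * (real c - real a) + (2 + K - T)))"
      using assms(3) by simp
    thus ?thesis by (smt (verit) exp_gt_zero)
  next
    case 2
    have "((real c - real a) - real a + 1) * (2 + K) \<ge> (real y - real x) * (2 + K)"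
      using assms(6) k2 by (intro mult_right_mono) auto
    hence "((real c - real a) - real a + 1) * (2 + K) > T * (real a + (real c - real a) + 1)"
      using 2 assms(4) by simp
    hence "0 < (2 + K - T) * (real c - real a) - (2 + K + T) * real a + (2 + K - T)"
      by (simp add: algebra_simps)
    hence "1 \<le> exp (l * ((2 + K - T) * (real c - real a) - (2 + K + T) * real a + (2 + K - T)))"
      using assms(3) by simp
    thus ?thesis by (smt (verit) exp_gt_zero)
  qed
qed

lemma sumX1:
  "(\<Sum>a\<le>c. bh c a * exp (l * (al * real a - be * (real c - real a) + al))) =
     exp (l * al) * ((exp (l * al) + exp (- (l * be))) / 2) ^ c"
proof -
  have t: "exp (l * (al * real a - be * (real c - real a) + al)) =
      exp (l * al) * exp (- (l * be)) ^ c * exp (l * (al + be)) ^ a" for a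
  proof -
    have "l * (al * real a - be * (real c - real a) + al) =
          l * al + real c * (- (l * be)) + real a * (l * (al + be))"
      by (simp add: algebra_simps)
    thus ?thesis by (simp only: exp_add exp_of_nat_mult)
  qed
  have "(\<Sum>a\<le>c. bh c a * exp (l * (al * real a - be * (real c - real a) + al))) =
     exp (l * al) * exp (- (l * be)) ^ c * (\<Sum>a\<le>c. bh c a * exp (l * (al + be)) ^ a)"
    unfolding t sum_distrib_left by (intro sum.cong refl) (simp add: mult_ac)
  also have "\<dots> = exp (l * al) * (exp (- (l * be)) * ((1 + exp (l * (al + be))) / 2)) ^ c"
    unfolding pgf_bh by (simp only: power_mult_distrib mult.assoc)
  also have "exp (- (l * be)) * ((1 + exp (l * (al + be))) / 2) = (exp (l * al) + exp (- (l * be))) / 2"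
    by (simp add: field_simps exp_add[symmetric] algebra_simps)
  finally show ?thesis .
qed

lemma sumX2:
  "(\<Sum>a\<le>c. bh c a * exp (l * (al * (real c - real a) - be * real a + al))) =
     exp (l * al) * ((exp (l * al) + exp (- (l * be))) / 2) ^ c"
proof -
  have t: "exp (l * (al * (real c - real a) - be * real a + al)) =
      exp (l * al) * exp (l * al) ^ c * exp (- (l * (al + be))) ^ a" for a
  proof -
    have "l * (al * (real c - real a) - be * real a + al) =
          l * al + real c * (l * al) + real a * (- (l * (al + be)))"
      by (simp add: algebra_simps)
    thus ?thesis by (simp only: exp_add exp_of_nat_mult)
  qed
  have "(\<Sum>a\<le>c. bh c a * exp (l * (al * (real c - real a) - be * real a + al))) =
     exp (l * al) * exp (l * al) ^ c * (\<Sum>a\<le>c. bh c a * exp (- (l * (al + be))) ^ a)"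
    unfolding t sum_distrib_left by (intro sum.cong refl) (simp add: mult_ac)
  also have "\<dots> = exp (l * al) * (exp (l * al) * ((1 + exp (- (l * (al + be)))) / 2)) ^ c"
    unfolding pgf_bh by (simp only: power_mult_distrib mult.assoc)
  also have "exp (l * al) * ((1 + exp (- (l * (al + be)))) / 2) = (exp (l * al) + exp (- (l * be))) / 2"
    by (simp add: field_simps exp_add[symmetric] algebra_simps)
  finally show ?thesis .
qed

lemma ind_le:
  fixes K T l :: real
  assumes "a \<le> c" "0 \<le> K" "0 < l"
    "(x = Suc a \<and> y = c - a) \<or> (x = a \<and> y = Suc (c - a))"
  shows "indicator (- Gset K T) (x, y) \<le>
           exp (l * ((2 + K - T) * real a - (2 + K + T) * (real c - real a) + (2 + K - T))) +
           exp (l * ((2 + K - T) * (real c - real a) - (2 + K + T) * real a + (2 + K - T)))"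
proof (cases "(x, y) \<in> Gset K T")
  case True
  thus ?thesis by (simp add: add_nonneg_nonneg)
next
  case False
  have "1 \<le> exp (l * ((2 + K - T) * real a - (2 + K + T) * (real c - real a) + (2 + K - T))) +
           exp (l * ((2 + K - T) * (real c - real a) - (2 + K + T) * real a + (2 + K - T)))"
    by (rule bad_point[OF assms(1-3) _ _ _ False]) (use assms(1,4) in \<open>auto simp: of_nat_diff\<close>)
  thus ?thesis using False by simp
qed

lemma sum_split_gen: "(\<Sum>a\<in>A. (f a :: real) * (u a + v a)) = (\<Sum>a\<in>A. f a * u a) + (\<Sum>a\<in>A. f a * v a)"
  by (simp add: distrib_left sum.distrib)

lemma bad_bound:
  fixes K T l :: real
  assumes "0 < e0" "0 \<le> K" "0 < l"
  shows "measure_pmf.prob (P_dist n e0) (- Gset K T) \<le>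
           2 * exp (l * (2 + K - T)) * (1 - exp (-e0) + exp (-e0) *
             ((exp (l * (2 + K - T)) + exp (- (l * (2 + K + T)))) / 2)) ^ (n - 1)"
    and "measure_pmf.prob (Q_dist n e0) (- Gset K T) \<le>
           2 * exp (l * (2 + K - T)) * (1 - exp (-e0) + exp (-e0) *
             ((exp (l * (2 + K - T)) + exp (- (l * (2 + K + T)))) / 2)) ^ (n - 1)"
proof -
  define al where "al = 2 + K - T"
  define be where "be = 2 + K + T"
  define m where "m = (exp (l * al) + exp (- (l * be))) / 2"
  define X where "X c a = exp (l * (al * real a - be * (real c - real a) + al)) +
           exp (l * (al * (real c - real a) - be * real a + al))" for c a
  define pp where "pp = exp e0 / (exp e0 + 1)"
  have pp: "0 \<le> pp" "pp \<le> 1" unfolding pp_def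
    using exp_gt_zero[of e0] by (auto simp: divide_simps add_pos_pos)
  have q: "0 \<le> exp (-e0)" "exp (-e0) \<le> 1" using assms(1) by auto
  have sumX: "(\<Sum>a\<le>c. bh c a * X c a) = 2 * exp (l * al) * m ^ c" for c
    unfolding X_def sum_split_gen sumX1 sumX2 m_def by simp
  have tot: "(\<Sum>c\<le>n-1. pmf (binomial_pmf (n - 1) (exp (-e0))) c * (\<Sum>a\<le>c. bh c a * X c a))
      = 2 * exp (l * al) * (1 - exp (-e0) + exp (-e0) * m) ^ (n - 1)"
  proof -
    have "(\<Sum>c\<le>n-1. pmf (binomial_pmf (n - 1) (exp (-e0))) c * (2 * exp (l * al) * m ^ c)) =
        2 * exp (l * al) * (\<Sum>c\<le>n-1. pmf (binomial_pmf (n - 1) (exp (-e0))) c * m ^ c)"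
      by (simp add: sum_distrib_left mult_ac)
    thus ?thesis unfolding sumX pgf_binomial[OF q] .
  qed
  have key: "pp * indicator (- Gset K T) (x1, y1) + (1 - pp) * indicator (- Gset K T) (x2, y2) \<le> X c a"
    if "a \<le> c" "(x1 = Suc a \<and> y1 = c - a) \<or> (x1 = a \<and> y1 = Suc (c - a))"
       "(x2 = Suc a \<and> y2 = c - a) \<or> (x2 = a \<and> y2 = Suc (c - a))" for a c x1 y1 x2 y2
  proof -
    have i1: "indicator (- Gset K T) (x1, y1) \<le> X c a"
      unfolding X_def al_def be_def by (rule ind_le[OF that(1) assms(2,3) that(2)])
    have i2: "indicator (- Gset K T) (x2, y2) \<le> X c a"
      unfolding X_def al_def be_def by (rule ind_le[OF that(1) assms(2,3) that(3)])
    have "pp * indicator (- Gset K T) (x1, y1) + (1 - pp) * indicator (- Gset K T) (x2, y2)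
        \<le> pp * X c a + (1 - pp) * X c a"
      using i1 i2 pp by (intro add_mono mult_left_mono) auto
    thus ?thesis by (simp add: algebra_simps)
  qed
  show "measure_pmf.prob (P_dist n e0) (- Gset K T) \<le>
           2 * exp (l * (2 + K - T)) * (1 - exp (-e0) + exp (-e0) *
             ((exp (l * (2 + K - T)) + exp (- (l * (2 + K + T)))) / 2)) ^ (n - 1)"
  proof -
    have "measure_pmf.prob (P_dist n e0) (- Gset K T) =
       measure_pmf.prob (CAD n e0) ((\<lambda>(C, A, D). (A + of_bool D, C - A + 1 - of_bool D)) -` (- Gset K T))"
      unfolding P_dist_def measure_map_pmf ..
    also have "\<dots> \<le> (\<Sum>c\<le>n-1. pmf (binomial_pmf (n - 1) (exp (-e0))) c * (\<Sum>a\<le>c. bh c a * X c a))"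
      unfolding prob_CAD[OF assms(1)] bh_def[symmetric] pp_def[symmetric]
      by (intro sum_mono mult_left_mono pmf_nonneg bh_nonneg)
         (auto intro!: key simp: Suc_diff_le indicator_vimage)
    finally show ?thesis unfolding tot m_def al_def be_def .
  qed
  show "measure_pmf.prob (Q_dist n e0) (- Gset K T) \<le>
           2 * exp (l * (2 + K - T)) * (1 - exp (-e0) + exp (-e0) *
             ((exp (l * (2 + K - T)) + exp (- (l * (2 + K + T)))) / 2)) ^ (n - 1)"
  proof -
    have "measure_pmf.prob (Q_dist n e0) (- Gset K T) =
       measure_pmf.prob (CAD n e0) ((\<lambda>(C, A, D). (A + 1 - of_bool D, C - A + of_bool D)) -` (- Gset K T))"
      unfolding Q_dist_def measure_map_pmf ..
    also have "\<dots> \<le> (\<Sum>c\<le>n-1. pmf (binomial_pmf (n - 1) (exp (-e0))) c * (\<Sum>a\<le>c. bh c a * X c a))"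
      unfolding prob_CAD[OF assms(1)] bh_def[symmetric] pp_def[symmetric]
      by (intro sum_mono mult_left_mono pmf_nonneg bh_nonneg)
         (auto intro!: key simp: Suc_diff_le indicator_vimage)
    finally show ?thesis unfolding tot m_def al_def be_def .
  qed
qed




lemma exp_le_neg:
  fixes x :: real assumes "x \<le> 0"
  shows "exp x \<le> 1 + x + x^2 / 2"
proof -
  obtain t where t: "exp x = (\<Sum>m<3. x ^ m / fact m) + exp t / fact 3 * x ^ 3"
    using Maclaurin_exp_le[of x 3] by blast
  have "0 \<le> x * x" by simp
  hence "x * x * x \<le> 0" using mult_nonneg_nonpos assms by blast
  hence "x ^ 3 \<le> 0" by (simp add: power3_eq_cube)
  hence "exp t / fact 3 * x ^ 3 \<le> 0" by (intro mult_nonneg_nonpos) auto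
  moreover have "(\<Sum>m<3. x ^ m / fact m) = 1 + x + x^2 / 2"
    by (simp add: eval_nat_numeral fact_numeral)
  ultimately show ?thesis using t by simp
qed

lemma exp_le_quad:
  fixes x :: real assumes "x \<le> 1"
  shows "exp x \<le> 1 + x + x^2"
proof (cases "0 \<le> x")
  case True thus ?thesis using exp_bound assms by blast
next
  case False
  hence "exp x \<le> 1 + x + x^2 / 2" by (intro exp_le_neg) simp
  also have "\<dots> \<le> 1 + x + x^2" by simp
  finally show ?thesis .
qed

lemma m_bound:
  fixes l al be T :: real
  assumes "0 < l" "-2 \<le> al" "al \<le> 2" "0 \<le> be" "be \<le> 2 + 2 * T" "l * al \<le> 1" "al - be = -2 * T"
    "0 \<le> T"
  shows "(exp (l * al) + exp (- (l * be))) / 2 - 1 \<le> - l * T + l^2 * (2 + (1 + T)^2)"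
proof -
  have e1: "exp (l * al) \<le> 1 + l * al + (l * al)^2" by (rule exp_le_quad[OF assms(6)])
  have e2: "exp (- (l * be)) \<le> 1 + (- (l * be)) + (- (l * be))^2 / 2"
    using assms by (intro exp_le_neg) simp
  have a2: "al^2 \<le> 4"
  proof -
    have "\<bar>al\<bar> \<le> 2" using assms(2,3) by simp
    hence "\<bar>al\<bar>^2 \<le> 2^2" by (intro power_mono) auto
    thus ?thesis by simp
  qed
  have b2: "be^2 \<le> (2 + 2 * T)^2" using assms(4,5) by (intro power_mono) auto
  have "(exp (l * al) + exp (- (l * be))) / 2 - 1 \<le>
        (l * (al - be) + l^2 * (al^2 + be^2 / 2)) / 2"
  proof -
    have "(exp (l * al) + exp (- (l * be))) / 2 - 1 \<le>
       ((1 + l * al + (l * al)^2) + (1 + (- (l * be)) + (- (l * be))^2 / 2)) / 2 - 1"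
      using e1 e2 by simp
    also have "\<dots> = (l * al - l * be + ((l * al)^2 + (l * be)^2 / 2)) / 2"
      by (simp add: field_simps)
    also have "\<dots> = (l * (al - be) + l^2 * (al^2 + be^2 / 2)) / 2"
      by (simp add: power_mult_distrib algebra_simps)
    finally show ?thesis .
  qed
  also have "\<dots> = - l * T + l^2 * (al^2 + be^2 / 2) / 2"
  proof -
    have "l * (al - be) = - 2 * (l * T)" using assms(7) by simp
    thus ?thesis by (simp add: add_divide_distrib)
  qed
  also have "\<dots> \<le> - l * T + l^2 * (4 + (2 + 2 * T)^2 / 2) / 2"
    using a2 b2 by (intro add_left_mono divide_right_mono mult_left_mono add_mono) auto
  also have "\<dots> = - l * T + l^2 * (2 + (1 + T)^2)" by (simp add: power2_eq_square field_simps)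
  finally show ?thesis .
qed

lemma key_alg:
  fixes u v r L2 L4 \<rho> :: real
  assumes "0 < r" "0 \<le> u" "u^2 = 64 * r * L4" "v = 8 * r" "16 * r * L2 \<le> 1" "2/3 \<le> L2"
    "L2 \<le> L4" "L4 \<le> 2 * L2" "10/11 \<le> \<rho>"
  shows "4 * (u + v) + 4 * (2 + (1 + u + v)^2) * L2 \<le> \<rho> * (64 * L4 + 16 * u + 8 * v)"
proof -
  have h1: "L2 * v \<le> 1/2"
  proof -
    have "L2 * v = (16 * r * L2) / 2" using assms(4) by simp
    thus ?thesis using assms(5) by linarith
  qed
  have h2: "L2 * u^2 \<le> 4 * L4"
  proof -
    have "L2 * u^2 = 4 * L4 * (16 * r * L2)" using assms(3) by (simp add: algebra_simps)
    also have "\<dots> \<le> 4 * L4 * 1" using assms by (intro mult_left_mono) auto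
    finally show ?thesis by simp
  qed
  have h3: "L2 * u \<le> L2 + L4"
  proof (rule power2_le_imp_le)
    have "(L2 * u)^2 = L2 * (L2 * u^2)" by (simp add: power2_eq_square)
    also have "\<dots> \<le> L2 * (4 * L4)" using h2 assms(6) by (intro mult_left_mono) auto
    also have "\<dots> \<le> (L2 + L4)^2"
    proof -
      have "0 \<le> (L2 - L4)^2" by simp
      thus ?thesis by (simp add: power2_eq_square algebra_simps)
    qed
    finally show "(L2 * u)^2 \<le> (L2 + L4)^2" .
    show "0 \<le> L2 + L4" using assms by simp
  qed
  have vpos: "0 \<le> v" using assms by simp
  have h4: "(L2 * v) * u \<le> u / 2" using h1 assms(2) mult_right_mono[of "L2 * v" "1/2" u] by simp
  have h5: "(L2 * v) * v \<le> v / 2" using h1 vpos mult_right_mono[of "L2 * v" "1/2" v] by simp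
  have exp: "4 * (u + v) + 4 * (2 + (1 + u + v)^2) * L2 =
      4 * u + 4 * v + 12 * L2 + 8 * (L2 * u) + 8 * (L2 * v) + 4 * (L2 * u^2) + 8 * ((L2 * v) * u) + 4 * ((L2 * v) * v)"
    by (simp add: power2_eq_square algebra_simps)
  have "4 * (u + v) + 4 * (2 + (1 + u + v)^2) * L2 \<le> 8 * u + 6 * v + 20 * L2 + 24 * L4 + 4"
    unfolding exp using h1 h2 h3 h4 h5 by linarith
  also have "\<dots> \<le> 10/11 * (64 * L4 + 16 * u + 8 * v)"
  proof -
    have "10/11 * (64 * L4 + 16 * u + 8 * v) = 640/11 * L4 + 160/11 * u + 80/11 * v" by simp
    thus ?thesis using assms vpos by linarith
  qed
  also have "\<dots> \<le> \<rho> * (64 * L4 + 16 * u + 8 * v)"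
    using assms vpos by (intro mult_right_mono) auto
  finally show ?thesis .
qed

lemma real_part:
  fixes n :: nat and \<delta> e0 :: real
  assumes "0 < \<delta>" "\<delta> \<le> 1" "0 < e0"
    and "real n > 16 * ln (2 / \<delta>)"
    and "e0 \<le> ln (real n / (16 * ln (2 / \<delta>)))"
  defines "T \<equiv> 8 * sqrt (exp e0 * ln (4 / \<delta>)) / sqrt (real n) + 8 * exp e0 / real n"
  defines "K \<equiv> (exp e0 - 1) / (exp e0 + 1) * T"
  defines "W \<equiv> 2 + (1 + T)^2"
  defines "l \<equiv> T / (2 * W)"
  shows "2 * exp (l * (2 + K - T)) * (1 - exp (-e0) + exp (-e0) *
             ((exp (l * (2 + K - T)) + exp (- (l * (2 + K + T)))) / 2)) ^ (n - 1) \<le> \<delta>"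
    and "0 \<le> K" "0 < l"
proof -
  define e where "e = exp e0"
  define L2 where "L2 = ln (2 / \<delta>)"
  define L4 where "L4 = ln (4 / \<delta>)"
  define u where "u = 8 * sqrt (e * L4) / sqrt (real n)"
  define v where "v = 8 * e / real n"
  define r where "r = e / real n"
  define \<rho> where "\<rho> = (real n - 1) / real n"
  have e1: "1 < e" unfolding e_def using assms(3) by simp
  have L2ge: "ln 2 \<le> L2" unfolding L2_def using assms(1,2)
    by (subst ln_le_cancel_iff) (auto simp: field_simps)
  have L2ge': "2/3 \<le> L2" using L2ge ln2_ge_two_thirds by linarith
  have ln4: "ln (4::real) = 2 * ln 2"
  proof -
    have "ln ((2::real) ^ 2) = real 2 * ln 2" by (rule ln_realpow)
    thus ?thesis by simp
  qed
  have L4eq: "L4 = ln 2 + L2" unfolding L4_def L2_def using assms(1)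
    by (simp add: ln_mult[symmetric] ln_div ln4)
  have L2L4: "L2 \<le> L4" "L4 \<le> 2 * L2" using L4eq L2ge ln2_ge_two_thirds by auto
  have npos: "real n > 0" using assms(4) L2ge' unfolding L2_def by linarith
  have n11: "real n \<ge> 11"
  proof -
    have "real n > 10" using assms(4) L2ge' unfolding L2_def by linarith
    hence "10 < n" by simp
    hence "11 \<le> n" by simp
    thus ?thesis by simp
  qed
  have rho: "10/11 \<le> \<rho>" unfolding \<rho>_def using n11 by (simp add: field_simps)
  have ebound: "e \<le> real n / (16 * L2)"
  proof -
    have "e \<le> exp (ln (real n / (16 * L2)))" unfolding e_def L2_def using assms(5) by simp
    also have "\<dots> = real n / (16 * L2)" using npos L2ge' by simp
    finally show ?thesis .
  qed
  have rpos: "0 < r" unfolding r_def using npos e1 by simp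
  have r16: "16 * r * L2 \<le> 1"
    using ebound npos L2ge' unfolding r_def by (simp add: field_simps)
  have upos: "0 \<le> u" unfolding u_def using e1 L2L4 L2ge' by simp
  have u2: "u^2 = 64 * r * L4"
  proof -
    have "u^2 = 64 * (sqrt (e * L4))^2 / (sqrt (real n))^2"
      unfolding u_def by (simp add: power_divide power_mult_distrib)
    also have "\<dots> = 64 * (e * L4) / real n" using e1 L2L4 L2ge' npos by simp
    finally show ?thesis unfolding r_def by simp
  qed
  have vr: "v = 8 * r" unfolding v_def r_def by simp
  have Tuv: "T = u + v" unfolding T_def u_def v_def e_def L4_def ..
  have vpos: "0 \<le> v" using vr rpos by simp
  have Tpos: "0 < T" using Tuv upos vr rpos by simp
  have keyalg: "4 * (u + v) + 4 * (2 + (1 + u + v)^2) * L2 \<le> \<rho> * (64 * L4 + 16 * u + 8 * v)"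
    by (rule key_alg[OF rpos upos u2 vr r16 L2ge' L2L4 rho])
  define \<mu> where "\<mu> = (real n - 1) / e"
  have muT: "\<mu> * T^2 = \<rho> * (64 * L4 + 16 * u + 8 * v)"
  proof -
    have "\<mu> * T^2 = (real n - 1) / e * (u^2 + 2 * u * v + v^2)"
      unfolding \<mu>_def Tuv by (simp add: power2_sum)
    also have "\<dots> = (real n - 1) / e * (64 * (e / real n) * L4 + 2 * u * (8 * (e / real n)) + (8 * (e / real n))^2)"
      unfolding u2 vr r_def ..
    also have "\<dots> = \<rho> * (64 * L4 + 16 * u + 8 * (8 * (e / real n)))"
      unfolding \<rho>_def using e1 npos by (simp add: field_simps power2_eq_square)
    finally show ?thesis unfolding vr r_def .
  qed
  have W_def': "W = 2 + (1 + u + v)^2" unfolding W_def Tuv by (simp add: add.assoc)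
  have keyW: "4 * T + 4 * W * L2 \<le> \<mu> * T^2" using keyalg muT unfolding W_def' Tuv by simp
  have u3: "u \<le> 3"
  proof (rule power2_le_imp_le)
    have "u^2 = 4 * L4 * (16 * r * L2) / L2" unfolding u2 using L2ge' by (simp add: field_simps)
    also have "\<dots> \<le> 4 * L4 * 1 / L2" using r16 L2L4 L2ge' by (intro divide_right_mono mult_left_mono) auto
    also have "\<dots> \<le> 8" using L2L4 L2ge' by (simp add: field_simps)
    finally show "u^2 \<le> 3^2" by simp
  qed simp
  have v1: "v \<le> 1"
  proof -
    have "v = (16 * r * L2) / (2 * L2)" unfolding vr using L2ge' by (simp add: field_simps)
    also have "\<dots> \<le> 1 / (2 * L2)" using r16 L2ge' by (intro divide_right_mono) auto
    also have "\<dots> \<le> 1" using L2ge' by (simp add: field_simps)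
    finally show ?thesis .
  qed
  have T4: "T \<le> 4" using Tuv u3 v1 by simp
  have Kdef: "K = (e - 1) / (e + 1) * T" unfolding K_def e_def ..
  have frac: "0 \<le> (e - 1) / (e + 1)" "(e - 1) / (e + 1) \<le> 1" using e1 by (auto simp: field_simps)
  have K0: "0 \<le> K" unfolding Kdef using frac Tpos by (intro mult_nonneg_nonneg) auto
  have KT: "K \<le> T" unfolding Kdef using frac Tpos mult_right_mono[of "(e - 1) / (e + 1)" 1 T] by linarith
  show "0 \<le> K" by (rule K0)
  have Wpos: "0 < W" unfolding W_def by (simp add: add_pos_nonneg)
  have TW: "T \<le> W"
  proof -
    have "0 \<le> T * T" by simp
    thus ?thesis unfolding W_def using Tpos by (simp add: power2_eq_square algebra_simps)
  qed
  have lpos: "0 < l" unfolding l_def using Tpos Wpos by simp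
  show "0 < l" by (rule lpos)
  define al where "al = 2 + K - T"
  define be where "be = 2 + K + T"
  define m where "m = (exp (l * al) + exp (- (l * be))) / 2"
  have lal: "l * al \<le> 1"
  proof -
    have "l * al \<le> l * 2" using lpos KT unfolding al_def by (intro mult_left_mono) auto
    also have "\<dots> = T / W" unfolding l_def using Wpos by simp
    also have "\<dots> \<le> 1" using TW Wpos by simp
    finally show ?thesis .
  qed
  have mb: "m - 1 \<le> - l * T + l^2 * W"
    unfolding m_def W_def
    by (rule m_bound[OF lpos]) (use KT K0 T4 Tpos lal in \<open>auto simp: al_def be_def\<close>)
  have mb2: "- l * T + l^2 * W = - (T^2) / (4 * W)"
    unfolding l_def using Wpos by (simp add: field_simps power2_eq_square)
  define q where "q = exp (-e0)"
  have qe: "q = 1 / e" unfolding q_def e_def by (simp add: exp_minus inverse_eq_divide)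
  have q01: "0 < q" "q \<le> 1" unfolding q_def using assms(3) by auto
  have mpos: "0 < m" unfolding m_def by (simp add: add_pos_pos)
  have "0 \<le> q * m" using q01 mpos by simp
  hence base0: "0 \<le> 1 - q + q * m" using q01 by linarith
  have "1 - q + q * m = 1 + q * (m - 1)" by (simp add: algebra_simps)
  also have "\<dots> \<le> exp (q * (m - 1))" by (rule exp_ge_add_one_self)
  finally have b1: "1 - q + q * m \<le> exp (q * (m - 1))" .
  have "(1 - q + q * m) ^ (n - 1) \<le> exp (q * (m - 1)) ^ (n - 1)"
    using base0 b1 by (intro power_mono)
  also have "\<dots> = exp (real (n - 1) * (q * (m - 1)))" by (simp add: exp_of_nat_mult)
  finally have pw: "(1 - q + q * m) ^ (n - 1) \<le> exp (real (n - 1) * (q * (m - 1)))" .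
  have Nq: "real (n - 1) * q = \<mu>" unfolding \<mu>_def qe using n11 by (simp add: of_nat_diff)
  have mu0: "0 \<le> \<mu>" unfolding \<mu>_def using n11 e1 by simp
  have expo: "l * al + real (n - 1) * (q * (m - 1)) \<le> - L2"
  proof -
    have "real (n - 1) * (q * (m - 1)) = \<mu> * (m - 1)" using Nq by (simp add: mult.assoc[symmetric])
    also have "\<dots> \<le> \<mu> * (- (T^2) / (4 * W))" using mb mb2 mu0 by (intro mult_left_mono) auto
    finally have a: "real (n - 1) * (q * (m - 1)) \<le> \<mu> * (- (T^2) / (4 * W))" .
    have b: "l * al \<le> T / W"
    proof -
      have "l * al \<le> l * 2" using lpos KT unfolding al_def by (intro mult_left_mono) auto
      thus ?thesis unfolding l_def using Wpos by simp
    qed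
    have "T / W + \<mu> * (- (T^2) / (4 * W)) = (4 * T - \<mu> * T^2) / (4 * W)"
      using Wpos by (simp add: field_simps)
    also have "\<dots> \<le> (- 4 * W * L2) / (4 * W)" using keyW Wpos by (intro divide_right_mono) auto
    also have "\<dots> = - L2" using Wpos by simp
    finally show ?thesis using a b by linarith
  qed
  have "2 * exp (l * al) * (1 - q + q * m) ^ (n - 1) \<le> 2 * exp (l * al) * exp (real (n - 1) * (q * (m - 1)))"
    using pw by simp
  also have "\<dots> = 2 * exp (l * al + real (n - 1) * (q * (m - 1)))" by (simp add: exp_add)
  also have "\<dots> \<le> 2 * exp (- L2)" using expo by simp
  also have "\<dots> = \<delta>" unfolding L2_def using assms(1) by (simp add: exp_minus)
  finally show "2 * exp (l * (2 + K - T)) * (1 - exp (-e0) + exp (-e0) *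
             ((exp (l * (2 + K - T)) + exp (- (l * (2 + K + T)))) / 2)) ^ (n - 1) \<le> \<delta>"
    unfolding m_def al_def be_def q_def .
qed


theorem lemma3p5:
  fixes n :: nat and \<delta> \<epsilon>0 :: real
  assumes "0 < \<delta>" "\<delta> \<le> 1" "0 < \<epsilon>0"
    and "real n > 16 * ln (2 / \<delta>)"
    and "\<epsilon>0 \<le> ln (real n / (16 * ln (2 / \<delta>)))"
  shows "indist
     (ln (1 + (exp \<epsilon>0 - 1) / (exp \<epsilon>0 + 1) *
        (8 * sqrt (exp \<epsilon>0 * ln (4 / \<delta>)) / sqrt (real n) + 8 * exp \<epsilon>0 / real n)))
     \<delta> (P_dist n \<epsilon>0) (Q_dist n \<epsilon>0)"
proof -
  define T where "T = 8 * sqrt (exp \<epsilon>0 * ln (4 / \<delta>)) / sqrt (real n) + 8 * exp \<epsilon>0 / real n"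
  define K where "K = (exp \<epsilon>0 - 1) / (exp \<epsilon>0 + 1) * T"
  define W where "W = 2 + (1 + T)^2"
  define l where "l = T / (2 * W)"
  note rp = real_part[OF assms, folded T_def, folded K_def W_def, folded l_def]
  have K0: "0 \<le> K" and lpos: "0 < l" using rp(2,3) by auto
  have Keq: "K * (exp \<epsilon>0 + 1) = (exp \<epsilon>0 - 1) * T"
  proof -
    have ne: "exp \<epsilon>0 + 1 \<noteq> 0" using exp_gt_zero[of \<epsilon>0] by linarith
    show ?thesis unfolding K_def using ne by simp
  qed
  have badP: "measure_pmf.prob (P_dist n \<epsilon>0) (- Gset K T) \<le> \<delta>"
    using bad_bound(1)[OF assms(3) K0 lpos, of n T] rp(1) by linarith
  have badQ: "measure_pmf.prob (Q_dist n \<epsilon>0) (- Gset K T) \<le> \<delta>"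
    using bad_bound(2)[OF assms(3) K0 lpos, of n T] rp(1) by linarith
  have K1: "0 < 1 + K" using K0 by simp
  have eps: "exp (ln (1 + K)) = 1 + K" using K1 by simp
  have epsm: "exp (- ln (1 + K)) = 1 / (1 + K)" using K1 by (simp add: exp_minus inverse_eq_divide)
  show ?thesis
    unfolding indist_def T_def[symmetric] K_def[symmetric]
  proof (intro allI conjI)
    fix E
    have m1: "measure_pmf.prob (P_dist n \<epsilon>0) E \<le> (1 + K) * measure_pmf.prob (Q_dist n \<epsilon>0) E + \<delta>"
      using main_ineq(1)[OF assms(3) K0 Keq, of n E] badP by linarith
    have m2: "measure_pmf.prob (Q_dist n \<epsilon>0) E \<le> (1 + K) * measure_pmf.prob (P_dist n \<epsilon>0) E + \<delta>"
      using main_ineq(2)[OF assms(3) K0 Keq, of n E] badQ by linarith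
    show "measure_pmf.prob (P_dist n \<epsilon>0) E \<le> exp (ln (1 + K)) * measure_pmf.prob (Q_dist n \<epsilon>0) E + \<delta>"
      unfolding eps by (rule m1)
    have "(measure_pmf.prob (Q_dist n \<epsilon>0) E - \<delta>) / (1 + K) \<le> measure_pmf.prob (P_dist n \<epsilon>0) E"
      using m2 K1 by (simp add: divide_le_eq mult.commute)
    thus "exp (- ln (1 + K)) * (measure_pmf.prob (Q_dist n \<epsilon>0) E - \<delta>) \<le> measure_pmf.prob (P_dist n \<epsilon>0) E"
      unfolding epsm by simp
  qed
qed

end
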